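(* If $w$ is an almost periodic infinite word over a finite alphabet $A$ and $H$ is a finite graph with loops allowed on vertex set $A$, then $\mathcal{P}(w,H)$ is a minimal hereditary property above the Bell number.
   Context: Graphs in classes are finite, simple and loopless; a property (class) is a set of graphs closed under isomorphism, hereditary if closed under induced subgraphs. The speed $\mathcal{X}_n$ is the number of graphs in $\mathcal{X}$ on vertex set $\{1,\dots,n\}$. A hereditary property is above the Bell number if $\mathcal{X}_n\ge n^{(1-o(1))n}$ (equivalently its speed is at least the Bell number $B_n$); it is a minimal property above the Bell number if it is above the Bell number and no proper hereditary subclass is above the Bell number. A word over $A$ is a map $w:S\to A$ with $S=\{1,\dots,n\}$ or $S=\mathbb{N}$, $w_i=w(i)$. A finite word $f$ is a factor of $w$ if for some $s\ge0$, $f_i=w_{i+s}$ for $1\le i\le|f|$. An infinite word $w$ is almost periodic if for every factor $f$ of $w$ there is $k_f$ such that every factor of $w$ of length at least $k_f$ contains $f$ as a factor. For $H$ with loops allowed on $A$ and positive integers $u_1<\dots<u_m$, $G_{w,H}(u_1,\dots,u_m)$ is the graph on $\{u_1,\dots,u_m\}$ where $u_iu_j$ is an edge iff either $|u_i-u_j|=1$ and $w_{u_i}w_{u_j}\notin E(H)$, or $|u_i-u_j|>1$ and $w_{u_i}w_{u_j}\in E(H)$ (equal letters $a$: this refers to a loop at $a$). $\mathcal{P}(w,H)$ is the class of all graphs isomorphic to some $G_{w,H}(u_1,\dots,u_m)$. *)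

theory Defs
  imports Complex_Main
begin

text \<open>Since properties are closed under isomorphism,
restricting vertex labels to nat loses nothing.\<close>

type_synonym graph = "nat set \<times> nat set set"

definition is_graph :: "graph \<Rightarrow> bool" where
  "is_graph G \<longleftrightarrow> finite (fst G) \<and>
     snd G \<subseteq> {{x, y} | x y. x \<in> fst G \<and> y \<in> fst G \<and> x \<noteq> y}"

definition graph_iso :: "graph \<Rightarrow> graph \<Rightarrow> bool" where
  "graph_iso G G' \<longleftrightarrow> (\<exists>f. bij_betw f (fst G) (fst G') \<and>
     (\<forall>x\<in>fst G. \<forall>y\<in>fst G. {x, y} \<in> snd G \<longleftrightarrow> {f x, f y} \<in> snd G'))"

definition induced_subgraph :: "graph \<Rightarrow> graph \<Rightarrow> bool" where
  "induced_subgraph G' G \<longleftrightarrow> fst G' \<subseteq> fst G \<and> snd G' = {e \<in> snd G. e \<subseteq> fst G'}"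

definition graph_property :: "graph set \<Rightarrow> bool" where
  "graph_property X \<longleftrightarrow> (\<forall>G\<in>X. is_graph G) \<and>
     (\<forall>G G'. G \<in> X \<longrightarrow> is_graph G' \<longrightarrow> graph_iso G G' \<longrightarrow> G' \<in> X)"

definition hereditary :: "graph set \<Rightarrow> bool" where
  "hereditary X \<longleftrightarrow> graph_property X \<and>
     (\<forall>G G'. G \<in> X \<longrightarrow> induced_subgraph G' G \<longrightarrow> G' \<in> X)"

definition speed :: "graph set \<Rightarrow> nat \<Rightarrow> nat" where
  "speed X n = card {G \<in> X. fst G = {1..n}}"

definition above_Bell :: "graph set \<Rightarrow> bool" where
  "above_Bell X \<longleftrightarrow> (\<exists>\<epsilon> :: nat \<Rightarrow> real. \<epsilon> \<longlonglongrightarrow> 0 \<and>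
     (\<forall>\<^sub>F n in sequentially. real (speed X n) \<ge> real n powr ((1 - \<epsilon> n) * real n)))"

definition minimal_above_Bell :: "graph set \<Rightarrow> bool" where
  "minimal_above_Bell X \<longleftrightarrow> hereditary X \<and> above_Bell X \<and>
     (\<forall>Y. hereditary Y \<longrightarrow> Y \<subset> X \<longrightarrow> \<not> above_Bell Y)"

text \<open>Infinite words are maps nat \<Rightarrow> 'a, read at positions 1, 2, 3, ...;
finite words are lists (list index i-1 holds letter f_i).\<close>
definition factor_of_word :: "'a list \<Rightarrow> (nat \<Rightarrow> 'a) \<Rightarrow> bool" where
  "factor_of_word f w \<longleftrightarrow> (\<exists>s. \<forall>i<length f. f ! i = w (i + 1 + s))"

definition factor_of_list :: "'a list \<Rightarrow> 'a list \<Rightarrow> bool" where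
  "factor_of_list f g \<longleftrightarrow> (\<exists>s. s + length f \<le> length g \<and> (\<forall>i<length f. f ! i = g ! (i + s)))"

definition almost_periodic :: "(nat \<Rightarrow> 'a) \<Rightarrow> bool" where
  "almost_periodic w \<longleftrightarrow> (\<forall>f. factor_of_word f w \<longrightarrow>
     (\<exists>k. \<forall>g. factor_of_word g w \<longrightarrow> length g \<ge> k \<longrightarrow> factor_of_list f g))"

text \<open>H (loops allowed) on alphabet A is given by a symmetric relation h on A;
h a a means a loop at a.\<close>
definition G_wH :: "(nat \<Rightarrow> 'a) \<Rightarrow> ('a \<Rightarrow> 'a \<Rightarrow> bool) \<Rightarrow> nat set \<Rightarrow> graph" where
  "G_wH w h U = (U, {{x, y} | x y. x \<in> U \<and> y \<in> U \<and> x \<noteq> y \<and>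
      (((x = y + 1 \<or> y = x + 1) \<and> \<not> h (w x) (w y)) \<or>
       (\<not> (x = y + 1 \<or> y = x + 1) \<and> h (w x) (w y)))})"

definition P_wH :: "(nat \<Rightarrow> 'a) \<Rightarrow> ('a \<Rightarrow> 'a \<Rightarrow> bool) \<Rightarrow> graph set" where
  "P_wH w h = {G. is_graph G \<and> (\<exists>U. finite U \<and> 0 \<notin> U \<and> graph_iso G (G_wH w h U))}"

end

theory Submission
  imports Defs "HOL-Combinatorics.Permutations" "HOL-Library.FuncSet"
begin

definition Redge :: "(nat \<Rightarrow> 'a) \<Rightarrow> ('a \<Rightarrow> 'a \<Rightarrow> bool) \<Rightarrow> nat \<Rightarrow> nat \<Rightarrow> bool" where
  "Redge w h x y \<longleftrightarrow> (((x = y + 1 \<or> y = x + 1) \<and> \<not> h (w x) (w y)) \<or>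
       (\<not> (x = y + 1 \<or> y = x + 1) \<and> h (w x) (w y)))"

lemma Redge_sym:
  assumes "\<forall>a b. h a b \<longrightarrow> h b a"
  shows "Redge w h x y \<longleftrightarrow> Redge w h y x"
  using assms unfolding Redge_def by blast

lemma GwH_edge:
  assumes sym: "\<forall>a b. h a b \<longrightarrow> h b a"
  shows "{a, b} \<in> snd (G_wH w h U) \<longleftrightarrow> a \<in> U \<and> b \<in> U \<and> a \<noteq> b \<and> Redge w h a b"
proof
  assume "{a, b} \<in> snd (G_wH w h U)"
  then obtain x y where xy: "{a,b} = {x,y}" "x \<in> U" "y \<in> U" "x \<noteq> y" "Redge w h x y"
    unfolding G_wH_def Redge_def by auto
  then have "(a = x \<and> b = y) \<or> (a = y \<and> b = x)" by (auto simp: doubleton_eq_iff)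
  then show "a \<in> U \<and> b \<in> U \<and> a \<noteq> b \<and> Redge w h a b"
    using xy Redge_sym[OF sym, of w x y] by auto
next
  assume "a \<in> U \<and> b \<in> U \<and> a \<noteq> b \<and> Redge w h a b"
  then show "{a, b} \<in> snd (G_wH w h U)"
    unfolding G_wH_def Redge_def by auto
qed

lemma fst_GwH[simp]: "fst (G_wH w h U) = U"
  by (simp add: G_wH_def)

lemma is_graph_GwH: "finite U \<Longrightarrow> is_graph (G_wH w h U)"
  unfolding is_graph_def G_wH_def by auto

lemma graph_iso_sym:
  assumes "graph_iso G G'" shows "graph_iso G' G"
proof -
  obtain f where f: "bij_betw f (fst G) (fst G')"
    "\<forall>x\<in>fst G. \<forall>y\<in>fst G. {x, y} \<in> snd G \<longleftrightarrow> {f x, f y} \<in> snd G'"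
    using assms unfolding graph_iso_def by blast
  let ?g = "inv_into (fst G) f"
  have g: "bij_betw ?g (fst G') (fst G)" using f(1) by (rule bij_betw_inv_into)
  have "\<forall>x\<in>fst G'. \<forall>y\<in>fst G'. {x, y} \<in> snd G' \<longleftrightarrow> {?g x, ?g y} \<in> snd G"
  proof (intro ballI)
    fix x y assume "x \<in> fst G'" "y \<in> fst G'"
    then have "?g x \<in> fst G" "?g y \<in> fst G" "f (?g x) = x" "f (?g y) = y"
      using f(1) by (auto simp: bij_betw_def inv_into_into f_inv_into_f)
    then show "{x, y} \<in> snd G' \<longleftrightarrow> {?g x, ?g y} \<in> snd G" using f(2) by metis
  qed
  then show ?thesis using g unfolding graph_iso_def by blast
qed

lemma graph_iso_trans:
  assumes "graph_iso G G'" "graph_iso G' G''" shows "graph_iso G G''"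
proof -
  obtain f where f: "bij_betw f (fst G) (fst G')"
    "\<forall>x\<in>fst G. \<forall>y\<in>fst G. {x, y} \<in> snd G \<longleftrightarrow> {f x, f y} \<in> snd G'"
    using assms(1) unfolding graph_iso_def by blast
  obtain g where g: "bij_betw g (fst G') (fst G'')"
    "\<forall>x\<in>fst G'. \<forall>y\<in>fst G'. {x, y} \<in> snd G' \<longleftrightarrow> {g x, g y} \<in> snd G''"
    using assms(2) unfolding graph_iso_def by blast
  have "bij_betw (g \<circ> f) (fst G) (fst G'')" using f(1) g(1) by (rule bij_betw_trans)
  moreover have "\<forall>x\<in>fst G. \<forall>y\<in>fst G. {x, y} \<in> snd G \<longleftrightarrow> {(g \<circ> f) x, (g \<circ> f) y} \<in> snd G''"
  proof (intro ballI)
    fix x y assume xy: "x \<in> fst G" "y \<in> fst G"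
    then have "f x \<in> fst G'" "f y \<in> fst G'" using f(1) by (auto simp: bij_betw_def)
    then show "{x, y} \<in> snd G \<longleftrightarrow> {(g \<circ> f) x, (g \<circ> f) y} \<in> snd G''"
      using f(2) g(2) xy by (metis comp_apply)
  qed
  ultimately show ?thesis unfolding graph_iso_def by blast
qed

lemma iso_edges:
  assumes "is_graph G" "\<forall>x\<in>fst G. \<forall>y\<in>fst G. {x, y} \<in> snd G \<longleftrightarrow> {f x, f y} \<in> snd G'"
  shows "snd G = {{x, y} | x y. x \<in> fst G \<and> y \<in> fst G \<and> x \<noteq> y \<and> {f x, f y} \<in> snd G'}"
  using assms unfolding is_graph_def by blast

lemma iso_GwH_restrict:
  assumes sym: "\<forall>a b. h a b \<longrightarrow> h b a"
    and f: "bij_betw f (fst G) U"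
    "\<forall>x\<in>fst G. \<forall>y\<in>fst G. {x, y} \<in> snd G \<longleftrightarrow> {f x, f y} \<in> snd (G_wH w h U)"
    and V: "V \<subseteq> fst G"
  shows "graph_iso (V, {e \<in> snd G. e \<subseteq> V}) (G_wH w h (f ` V))"
proof -
  have inj: "inj_on f (fst G)" using f(1) by (simp add: bij_betw_def)
  have b: "bij_betw f V (f ` V)" using inj V by (meson bij_betw_imageI inj_on_subset)
  have "\<forall>x\<in>V. \<forall>y\<in>V. {x, y} \<in> {e \<in> snd G. e \<subseteq> V} \<longleftrightarrow> {f x, f y} \<in> snd (G_wH w h (f ` V))"
  proof (intro ballI)
    fix x y assume xy: "x \<in> V" "y \<in> V"
    then have "x \<in> fst G" "y \<in> fst G" "f x \<in> U" "f y \<in> U" using V f(1) by (auto simp: bij_betw_def)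
    moreover have "f x = f y \<longleftrightarrow> x = y" using inj xy V by (meson inj_on_eq_iff subsetD)
    ultimately show "{x, y} \<in> {e \<in> snd G. e \<subseteq> V} \<longleftrightarrow> {f x, f y} \<in> snd (G_wH w h (f ` V))"
      using f(2) xy by (auto simp: GwH_edge[OF sym])
  qed
  then show ?thesis using b unfolding graph_iso_def fst_conv snd_conv fst_GwH
    by (intro exI[of _ f] conjI)
qed

lemma GwH_shift:
  assumes sym: "\<forall>a b. h a b \<longrightarrow> h b a"
    and "\<forall>u\<in>V. w (u + d) = w u"
  shows "graph_iso (G_wH w h V) (G_wH w h ((\<lambda>u. u + d) ` V))"
proof -
  have b: "bij_betw (\<lambda>u. u + d) V ((\<lambda>u. u + d) ` V)" by (simp add: bij_betw_imageI inj_on_def)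
  have "\<forall>x\<in>V. \<forall>y\<in>V. {x, y} \<in> snd (G_wH w h V) \<longleftrightarrow> {x + d, y + d} \<in> snd (G_wH w h ((\<lambda>u. u + d) ` V))"
    using assms(2) by (auto simp: GwH_edge[OF sym] Redge_def)
  then show ?thesis using b unfolding graph_iso_def fst_GwH
    by (intro exI[of _ "\<lambda>u. u + d"] conjI)
qed

lemma hereditary_P:
  assumes sym: "\<forall>a b. h a b \<longrightarrow> h b a"
  shows "hereditary (P_wH w h)"
  unfolding hereditary_def graph_property_def
proof (intro conjI allI impI ballI)
  fix G assume "G \<in> P_wH w h" then show "is_graph G" by (simp add: P_wH_def)
next
  fix G G' assume "G \<in> P_wH w h" "is_graph G'" "graph_iso G G'"
  then obtain U where U: "finite U" "0 \<notin> U" "graph_iso G (G_wH w h U)"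
    unfolding P_wH_def by blast
  have "graph_iso G' (G_wH w h U)"
    using graph_iso_trans[OF graph_iso_sym[OF \<open>graph_iso G G'\<close>] U(3)] .
  then show "G' \<in> P_wH w h" using U \<open>is_graph G'\<close> unfolding P_wH_def by blast
next
  fix G G' assume G: "G \<in> P_wH w h" and sub: "induced_subgraph G' G"
  then obtain U where U: "finite U" "0 \<notin> U" "graph_iso G (G_wH w h U)"
    and ig: "is_graph G" unfolding P_wH_def by blast
  obtain f where f: "bij_betw f (fst G) U"
    "\<forall>x\<in>fst G. \<forall>y\<in>fst G. {x, y} \<in> snd G \<longleftrightarrow> {f x, f y} \<in> snd (G_wH w h U)"
    using U(3) unfolding graph_iso_def by auto
  have V: "fst G' \<subseteq> fst G" and E: "snd G' = {e \<in> snd G. e \<subseteq> fst G'}"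
    using sub unfolding induced_subgraph_def by auto
  have G'eq: "G' = (fst G', {e \<in> snd G. e \<subseteq> fst G'})" using E by (metis prod.collapse)
  have "is_graph G'"
  proof -
    have "finite (fst G')" using ig V unfolding is_graph_def by (meson finite_subset)
    moreover have "snd G' \<subseteq> {{x, y} | x y. x \<in> fst G' \<and> y \<in> fst G' \<and> x \<noteq> y}"
    proof
      fix e assume "e \<in> snd G'"
      then have "e \<in> snd G" "e \<subseteq> fst G'" using E by auto
      then show "e \<in> {{x, y} | x y. x \<in> fst G' \<and> y \<in> fst G' \<and> x \<noteq> y}"
        using ig unfolding is_graph_def by blast
    qed
    ultimately show ?thesis unfolding is_graph_def by blast
  qed
  moreover have "graph_iso G' (G_wH w h (f ` fst G'))"
    using iso_GwH_restrict[OF sym f V] G'eq by simp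
  moreover have "finite (f ` fst G')" using \<open>is_graph G'\<close> unfolding is_graph_def by simp
  moreover have "0 \<notin> f ` fst G'" using U(2) f(1) V unfolding bij_betw_def by blast
  ultimately show "G' \<in> P_wH w h" unfolding P_wH_def by blast
qed

lemma no_long_run:
  assumes sym: "\<forall>a b. h a b \<longrightarrow> h b a"
    and ap: "almost_periodic w"
    and hered: "hereditary Y"
    and G0: "G0 \<in> P_wH w h" "G0 \<notin> Y"
  shows "\<exists>K. \<forall>G U f t. G \<in> Y \<longrightarrow> bij_betw f (fst G) U \<longrightarrow>
     (\<forall>x\<in>fst G. \<forall>y\<in>fst G. {x, y} \<in> snd G \<longleftrightarrow> {f x, f y} \<in> snd (G_wH w h U)) \<longrightarrow>
     \<not> {t+1..t+K} \<subseteq> U"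
proof -
  obtain U0 where U0: "finite U0" "0 \<notin> U0" "graph_iso G0 (G_wH w h U0)" and ig0: "is_graph G0"
    using G0(1) unfolding P_wH_def by blast
  define L where "L = Max (insert 0 U0)"
  have U0L: "U0 \<subseteq> {1..L}"
  proof
    fix u assume "u \<in> U0"
    then have "u \<le> L" using U0(1) unfolding L_def by simp
    moreover have "u \<noteq> 0" using U0(2) \<open>u \<in> U0\<close> by metis
    ultimately show "u \<in> {1..L}" by simp
  qed
  define f0 where "f0 = map w [1..<L+1]"
  have lf0: "length f0 = L" and f0i: "\<And>i. i < L \<Longrightarrow> f0 ! i = w (i + 1)"
    unfolding f0_def by (auto simp del: upt_Suc)
  have "factor_of_word f0 w" unfolding factor_of_word_def using lf0 f0i
    by (intro exI[of _ 0]) auto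
  then obtain K where K: "\<forall>g. factor_of_word g w \<longrightarrow> length g \<ge> K \<longrightarrow> factor_of_list f0 g"
    using ap unfolding almost_periodic_def by blast
  show ?thesis
  proof (intro exI[of _ K] allI impI notI)
    fix G U f t
    assume GY: "G \<in> Y" and f: "bij_betw f (fst G) U"
      "\<forall>x\<in>fst G. \<forall>y\<in>fst G. {x, y} \<in> snd G \<longleftrightarrow> {f x, f y} \<in> snd (G_wH w h U)"
      and run: "{t+1..t+K} \<subseteq> U"
    define g where "g = map w [t+1..<t+K+1]"
    have lg: "length g = K" and gi: "\<And>i. i < K \<Longrightarrow> g ! i = w (t + 1 + i)"
      unfolding g_def by (auto simp del: upt_Suc)
    have "factor_of_word g w" unfolding factor_of_word_def using lg gi
      by (intro exI[of _ t]) (auto simp: add.commute add.left_commute)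
    then have "factor_of_list f0 g" using K lg by auto
    then obtain s where s: "s + L \<le> K" "\<forall>i<L. f0 ! i = g ! (i + s)"
      unfolding factor_of_list_def lf0 lg by blast
    define d where "d = t + s"
    have wd: "\<forall>u\<in>U0. w (u + d) = w u"
    proof
      fix u assume "u \<in> U0"
      then have u: "1 \<le> u" "u \<le> L" using U0L by auto
      then have "f0 ! (u - 1) = g ! (u - 1 + s)" using s(2) by auto
      moreover have "f0 ! (u - 1) = w u" using f0i[of "u-1"] u by auto
      moreover have "g ! (u - 1 + s) = w (u + d)" using gi[of "u - 1 + s"] u s(1)
        unfolding d_def by (auto simp: ac_simps)
      ultimately show "w (u + d) = w u" by simp
    qed
    define W where "W = (\<lambda>u. u + d) ` U0"
    have WU: "W \<subseteq> U"
    proof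
      fix x assume "x \<in> W"
      then obtain u where "u \<in> U0" "x = u + d" unfolding W_def by auto
      then have "x \<in> {t+1..t+K}" using U0L s(1) unfolding d_def by auto
      then show "x \<in> U" using run by auto
    qed
    define V where "V = {x \<in> fst G. f x \<in> W}"
    have fV: "f ` V = W" using f(1) WU unfolding V_def bij_betw_def by auto
    have VG: "V \<subseteq> fst G" unfolding V_def by auto
    have "induced_subgraph (V, {e \<in> snd G. e \<subseteq> V}) G"
      unfolding induced_subgraph_def using VG by auto
    then have G'Y: "(V, {e \<in> snd G. e \<subseteq> V}) \<in> Y"
      using hered GY unfolding hereditary_def by blast
    have i1: "graph_iso (V, {e \<in> snd G. e \<subseteq> V}) (G_wH w h W)"
      using iso_GwH_restrict[OF sym f VG] fV by simp
    have i2: "graph_iso (G_wH w h W) (G_wH w h U0)"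
      using graph_iso_sym[OF GwH_shift[OF sym wd]] unfolding W_def .
    have "graph_iso (V, {e \<in> snd G. e \<subseteq> V}) G0"
      using graph_iso_trans[OF graph_iso_trans[OF i1 i2] graph_iso_sym[OF U0(3)]] .
    then have "G0 \<in> Y" using G'Y ig0 hered unfolding hereditary_def graph_property_def by blast
    then show False using G0(2) by simp
  qed
qed

lemma pair_set_mem:
  assumes "\<And>x y. Q x y \<longleftrightarrow> Q y x"
  shows "{a, b} \<in> {{x, y} | x y. x \<in> V \<and> y \<in> V \<and> x \<noteq> y \<and> Q x y} \<longleftrightarrow>
         a \<in> V \<and> b \<in> V \<and> a \<noteq> b \<and> Q a b"
proof
  assume "{a, b} \<in> {{x, y} | x y. x \<in> V \<and> y \<in> V \<and> x \<noteq> y \<and> Q x y}"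
  then obtain x y where xy: "{a,b} = {x,y}" "x \<in> V" "y \<in> V" "x \<noteq> y" "Q x y" by blast
  then have "(a = x \<and> b = y) \<or> (a = y \<and> b = x)" by (auto simp: doubleton_eq_iff)
  then show "a \<in> V \<and> b \<in> V \<and> a \<noteq> b \<and> Q a b" using xy assms by auto
qed blast

lemma finite_graphs_on: "finite {G. is_graph G \<and> fst G = V \<and> finite V}"
proof (cases "finite V")
  case True
  have "{G. is_graph G \<and> fst G = V \<and> finite V} \<subseteq> {V} \<times> Pow (Pow V)"
  proof
    fix G assume a: "G \<in> {G. is_graph G \<and> fst G = V \<and> finite V}"
    then have "fst G = V" by simp
    moreover have "snd G \<subseteq> Pow V" using a unfolding is_graph_def by blast
    ultimately show "G \<in> {V} \<times> Pow (Pow V)" by (cases G) auto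
  qed
  then show ?thesis using True by (meson finite.emptyI finite.insertI finite_Pow_iff finite_SigmaI finite_subset)
qed simp

lemma speed_finite: "finite {G \<in> X. fst G = {1..n}}" if "\<forall>G\<in>X. is_graph G"
  using that by (auto intro: finite_subset[OF _ finite_graphs_on[of "{1..n}"]])

lemma pow_le_exp_fact:
  fixes x :: real assumes "0 \<le> x"
  shows "x ^ n \<le> exp x * fact n"
proof -
  have "(\<Sum>k\<le>n. x ^ k / fact k) \<le> exp x"
    using assms summable_exp_generic[of x]
    by (auto simp: exp_def divide_inverse ac_simps intro!: sum_le_suminf)
  moreover have "x ^ n / fact n \<le> (\<Sum>k\<le>n. x ^ k / fact k)"
    by (rule member_le_sum) (use assms in auto)
  ultimately have "x ^ n / fact n \<le> exp x" by linarith
  then show ?thesis by (simp add: divide_le_eq mult.commute)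
qed

definition Gperm :: "(nat \<Rightarrow> 'a) \<Rightarrow> ('a \<Rightarrow> 'a \<Rightarrow> bool) \<Rightarrow> nat \<Rightarrow> (nat \<Rightarrow> nat) \<Rightarrow> graph" where
  "Gperm w h n p = ({1..n}, {{x, y} | x y. x \<in> {1..n} \<and> y \<in> {1..n} \<and> x \<noteq> y \<and> Redge w h (p x) (p y)})"

lemma Redge_con:
  assumes "h (w a) (w b) \<longleftrightarrow> h (w' a') (w' b')"
    and "Redge w h a b \<longleftrightarrow> Redge w' h a' b'"
  shows "(a = b + 1 \<or> b = a + 1) \<longleftrightarrow> (a' = b' + 1 \<or> b' = a' + 1)"
  using assms unfolding Redge_def by blast

lemma perm_inj:
  assumes sym: "\<forall>a b. h a b \<longrightarrow> h b a"
    and p: "p permutes {1..n}" and q: "q permutes {1..n}"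
    and G: "Gperm w h n p = Gperm w h n q"
    and L: "\<forall>x\<in>{1..n}. w (p x) = w (q x)"
    and one: "inv_into {1..n} p 1 = inv_into {1..n} q 1"
  shows "p = q"
proof -
  have bp: "bij_betw p {1..n} {1..n}" and bq: "bij_betw q {1..n} {1..n}"
    using p q by (auto intro: permutes_imp_bij)
  have symp: "\<And>r x y. Redge w h (r x) (r y) \<longleftrightarrow> Redge w h (r y) (r x)"
    using Redge_sym[OF sym] by blast
  have R: "Redge w h (p x) (p y) \<longleftrightarrow> Redge w h (q x) (q y)"
    if "x \<in> {1..n}" "y \<in> {1..n}" "x \<noteq> y" for x y
  proof -
    have "{x, y} \<in> snd (Gperm w h n p) \<longleftrightarrow> {x, y} \<in> snd (Gperm w h n q)" using G by simp
    then show ?thesis unfolding Gperm_def snd_conv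
      pair_set_mem[of "\<lambda>x y. Redge w h (p x) (p y)", OF symp[of p]]
      pair_set_mem[of "\<lambda>x y. Redge w h (q x) (q y)", OF symp[of q]] using that by simp
  qed
  have con: "(p x = p y + 1 \<or> p y = p x + 1) \<longleftrightarrow> (q x = q y + 1 \<or> q y = q x + 1)"
    if "x \<in> {1..n}" "y \<in> {1..n}" "x \<noteq> y" for x y
    by (rule Redge_con[of h w]) (use L R that in auto)
  have pin: "\<And>x. x \<in> {1..n} \<Longrightarrow> p x \<in> {1..n}" "\<And>x. x \<in> {1..n} \<Longrightarrow> q x \<in> {1..n}"
    using bp bq by (auto simp: bij_betw_def)
  have pinv: "\<And>k. k \<in> {1..n} \<Longrightarrow> inv_into {1..n} p k \<in> {1..n} \<and> p (inv_into {1..n} p k) = k"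
    using bp by (metis bij_betw_def bij_betw_inv_into_right inv_into_into)
  have qinv: "\<And>k. k \<in> {1..n} \<Longrightarrow> inv_into {1..n} q k \<in> {1..n} \<and> q (inv_into {1..n} q k) = k"
    using bq by (metis bij_betw_def bij_betw_inv_into_right inv_into_into)
  have injq: "inj_on q {1..n}" using bq by (simp add: bij_betw_def)
  have injp: "inj_on p {1..n}" using bp by (simp add: bij_betw_def)
  have main: "\<forall>x\<in>{1..n}. p x \<le> m \<longrightarrow> q x = p x" for m
  proof (induction m)
    case 0 then show ?case using pin by fastforce
  next
    case (Suc m)
    show ?case
    proof (intro ballI impI)
      fix x assume x: "x \<in> {1..n}" and le: "p x \<le> Suc m"
      show "q x = p x"
      proof (cases "p x \<le> m")
        case True then show ?thesis using Suc.IH x by blast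
      next
        case False
        then have px: "p x = Suc m" using le by simp
        show ?thesis
        proof (cases "m = 0")
          case True
          then have "p x = 1" using px by simp
          then have "x = inv_into {1..n} p 1" using inv_into_f_f[OF injp x] by simp
          then have "x = inv_into {1..n} q 1" using one by simp
          then have "q x = 1" using qinv[of 1] px x pin(1)[OF x] by auto
          then show ?thesis using \<open>p x = 1\<close> by simp
        next
          case False
          have mn: "m \<in> {1..n}" using False pin(1)[OF x] px by auto
          define y where "y = inv_into {1..n} p m"
          have y: "y \<in> {1..n}" "p y = m" using pinv[OF mn] unfolding y_def by auto
          have qy: "q y = m" using Suc.IH y by auto
          have xy: "x \<noteq> y" using px y by auto
          have "q x = q y + 1 \<or> q y = q x + 1" using con[OF x y(1) xy] px y by simp
          then show ?thesis
          proof
            assume "q x = q y + 1" then show ?thesis using qy px by simp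
          next
            assume a: "q y = q x + 1"
            then have qxm: "q x = m - 1" using qy by simp
            have "q x \<in> {1..n}" using pin(2)[OF x] .
            then have m1: "m - 1 \<in> {1..n}" using qxm by simp
            define z where "z = inv_into {1..n} p (m - 1)"
            have z: "z \<in> {1..n}" "p z = m - 1" using pinv[OF m1] unfolding z_def by auto
            then have "q z = m - 1" using Suc.IH by auto
            then have "z = x" using injq z(1) x qxm by (metis inj_on_eq_iff)
            then show ?thesis using z(2) px by simp
          qed
        qed
      qed
    qed
  qed
  show "p = q"
  proof
    fix x show "p x = q x"
    proof (cases "x \<in> {1..n}")
      case True then show ?thesis using main[of "p x"] by auto
    next
      case False then show ?thesis using p q by (simp add: permutes_not_in)
    qed
  qed
qed

lemma Gperm_in:
  assumes sym: "\<forall>a b. h a b \<longrightarrow> h b a" and p: "p permutes {1..n}"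
  shows "Gperm w h n p \<in> P_wH w h"
proof -
  have bp: "bij_betw p {1..n} {1..n}" using p by (rule permutes_imp_bij)
  have symp: "\<And>x y. Redge w h (p x) (p y) \<longleftrightarrow> Redge w h (p y) (p x)"
    using Redge_sym[OF sym] by blast
  have ig: "is_graph (Gperm w h n p)" unfolding is_graph_def Gperm_def by auto
  have "\<forall>x\<in>{1..n}. \<forall>y\<in>{1..n}. {x, y} \<in> snd (Gperm w h n p) \<longleftrightarrow>
          {p x, p y} \<in> snd (G_wH w h {1..n})"
  proof (intro ballI)
    fix x y assume xy: "x \<in> {1..n}" "y \<in> {1..n}"
    then have "p x \<in> {1..n}" "p y \<in> {1..n}" "p x = p y \<longleftrightarrow> x = y"
      using bp by (auto simp: bij_betw_def inj_on_eq_iff)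
    then show "{x, y} \<in> snd (Gperm w h n p) \<longleftrightarrow> {p x, p y} \<in> snd (G_wH w h {1..n})"
      unfolding Gperm_def snd_conv pair_set_mem[of "\<lambda>x y. Redge w h (p x) (p y)", OF symp]
        GwH_edge[OF sym] using xy by simp
  qed
  then have "graph_iso (Gperm w h n p) (G_wH w h {1..n})"
    unfolding graph_iso_def fst_GwH using bp by (intro exI[of _ p]) (simp add: Gperm_def)
  then show ?thesis using ig unfolding P_wH_def by (intro CollectI conjI exI[of _ "{1..n}"]) auto
qed

lemma speed_lower:
  assumes sym: "\<forall>a b. h a b \<longrightarrow> h b a" and A: "finite A" and wA: "\<forall>i\<ge>1. w i \<in> A"
    and n: "n \<ge> 1"
  shows "fact n \<le> speed (P_wH w h) n * card A ^ n * n"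
proof -
  define T where "T = {p. p permutes {1..n}}"
  define S where "S = {G \<in> P_wH w h. fst G = {1..n}}"
  define \<Phi> where "\<Phi> = (\<lambda>p. (Gperm w h n p, restrict (w \<circ> p) {1..n}, inv_into {1..n} p 1))"
  have inj: "inj_on \<Phi> T"
  proof
    fix p q assume "p \<in> T" "q \<in> T" "\<Phi> p = \<Phi> q"
    then have "p permutes {1..n}" "q permutes {1..n}" "Gperm w h n p = Gperm w h n q"
      "\<forall>x\<in>{1..n}. w (p x) = w (q x)" "inv_into {1..n} p 1 = inv_into {1..n} q 1"
      unfolding T_def \<Phi>_def by (auto simp: restrict_def fun_eq_iff) (metis comp_apply)
    then show "p = q" by (rule perm_inj[OF sym])
  qed
  have sub: "\<Phi> ` T \<subseteq> S \<times> (PiE {1..n} (\<lambda>_. A)) \<times> {1..n}"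
  proof
    fix z assume "z \<in> \<Phi> ` T"
    then obtain p where p: "p permutes {1..n}" "z = \<Phi> p" unfolding T_def by auto
    have bp: "bij_betw p {1..n} {1..n}" using p(1) by (rule permutes_imp_bij)
    have "Gperm w h n p \<in> S" unfolding S_def using Gperm_in[OF sym p(1)] by (simp add: Gperm_def)
    moreover have "restrict (w \<circ> p) {1..n} \<in> PiE {1..n} (\<lambda>_. A)"
      using bp wA by (auto simp: bij_betw_def) (metis atLeastAtMost_iff image_eqI)
    moreover have "inv_into {1..n} p 1 \<in> {1..n}"
      using bp n by (metis atLeastAtMost_iff bij_betw_def inv_into_into le_refl)
    ultimately show "z \<in> S \<times> (PiE {1..n} (\<lambda>_. A)) \<times> {1..n}" using p(2) unfolding \<Phi>_def
      by auto
  qed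
  have fS: "finite S" unfolding S_def by (rule speed_finite) (simp add: P_wH_def)
  have "fact n = card T" unfolding T_def by (simp add: card_permutations)
  also have "\<dots> = card (\<Phi> ` T)" using inj by (simp add: card_image)
  also have "\<dots> \<le> card (S \<times> (PiE {1..n} (\<lambda>_. A)) \<times> {1..n})"
    by (rule card_mono[OF _ sub]) (use fS A in \<open>simp add: finite_PiE\<close>)
  also have "\<dots> = card S * card A ^ n * n"
    using A by (simp add: card_cartesian_product card_PiE)
  finally show ?thesis unfolding speed_def S_def by simp
qed

lemma lim_eps:
  fixes C :: real
  shows "(\<lambda>n::nat. C / ln (real n) + 1 / real n) \<longlonglongrightarrow> 0"
proof -
  have l: "filterlim (\<lambda>n::nat. ln (real n)) at_top sequentially"
    using filterlim_compose[OF ln_at_top filterlim_real_sequentially] by (simp add: o_def)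
  have "(\<lambda>n::nat. C / ln (real n)) \<longlonglongrightarrow> 0"
    by (rule tendsto_divide_0[OF tendsto_const filterlim_at_top_imp_at_infinity[OF l]])
  moreover have "(\<lambda>n::nat. 1 / real n) \<longlonglongrightarrow> 0"
    using lim_const_over_n[of 1] by simp
  ultimately show ?thesis using tendsto_add[of _ 0 _ _ 0] by fastforce
qed

lemma above_Bell_P:
  assumes sym: "\<forall>a b. h a b \<longrightarrow> h b a" and A: "finite A" and wA: "\<forall>i\<ge>1. w i \<in> A"
  shows "above_Bell (P_wH w h)"
proof -
  define c where "c = card A"
  have c1: "c \<ge> 1" using wA A unfolding c_def by (metis card_0_eq empty_iff le_refl less_one not_le)
  define \<epsilon> where "\<epsilon> = (\<lambda>n::nat. (1 + ln (real c)) / ln (real n) + 1 / real n)"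
  have "\<epsilon> \<longlonglongrightarrow> 0" unfolding \<epsilon>_def by (rule lim_eps)
  moreover have "\<forall>\<^sub>F n in sequentially. real (speed (P_wH w h) n) \<ge> real n powr ((1 - \<epsilon> n) * real n)"
    unfolding eventually_sequentially
  proof (intro exI[of _ 2] allI impI)
    fix n :: nat assume n2: "n \<ge> 2"
    define N where "N = real n"
    define l where "l = ln N"
    define sp where "sp = real (speed (P_wH w h) n)"
    have N: "N \<ge> 2" using n2 unfolding N_def by simp
    have lpos: "l > 0" unfolding l_def using N by simp
    have cpos: "real c > 0" using c1 by simp
    have fa: "fact n \<le> sp * real c ^ n * N"
      using speed_lower[OF sym A wA, of n] n2 unfolding sp_def c_def N_def
      by (metis (mono_tags, opaque_lifting) of_nat_fact of_nat_le_iff of_nat_mult of_nat_power le_trans one_le_numeral)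
    have eq1: "(1 - \<epsilon> n) * N * l = N * l - N - N * ln (real c) - l"
      unfolding \<epsilon>_def N_def[symmetric] l_def[symmetric] using lpos N
      by (simp add: field_simps)
    have "real n powr ((1 - \<epsilon> n) * real n) = exp ((1 - \<epsilon> n) * N * l)"
      unfolding powr_def N_def l_def using N N_def by simp
    also have "\<dots> = exp (N * l) / (exp N * exp (N * ln (real c)) * exp l)"
      unfolding eq1 by (simp add: exp_diff)
    also have "exp (N * l) = N ^ n" unfolding N_def l_def
      using N N_def by (simp add: exp_of_nat_mult)
    also have "exp (N * ln (real c)) = real c ^ n" unfolding N_def
      using cpos by (simp add: exp_of_nat_mult)
    also have "exp l = N" unfolding l_def using N by simp
    also have "N ^ n / (exp N * real c ^ n * N) \<le> sp"
    proof -
      have "N ^ n \<le> exp N * fact n" using pow_le_exp_fact[of N n] N by simp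
      also have "\<dots> \<le> exp N * (sp * real c ^ n * N)" using fa by simp
      finally have "N ^ n \<le> sp * (exp N * real c ^ n * N)" by (simp add: ac_simps)
      moreover have "exp N * real c ^ n * N > 0" using cpos N by simp
      ultimately show ?thesis by (simp add: divide_le_eq)
    qed
    finally show "real (speed (P_wH w h) n) \<ge> real n powr ((1 - \<epsilon> n) * real n)"
      unfolding sp_def .
  qed
  ultimately show ?thesis unfolding above_Bell_def by blast
qed

lemma count_Q:
  assumes K: "K \<ge> 1" and n: "n \<ge> 1"
  shows "real (card {(\<rho>, \<tau>). \<rho> \<in> {1..n} \<rightarrow>\<^sub>E {1..n} \<and> \<tau> \<in> {1..n} \<rightarrow>\<^sub>E {0..<K} \<and>
      (\<forall>x\<in>{1..n}. \<rho> (\<rho> x) = \<rho> x) \<and> inj_on (\<lambda>x. (\<rho> x, \<tau> x)) {1..n}})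
    \<le> real K ^ n * 2 ^ n * real n powr (real n - real n / real K)"
proof -
  define Q where "Q = {(\<rho>, \<tau>). \<rho> \<in> {1..n} \<rightarrow>\<^sub>E {1..n} \<and> \<tau> \<in> {1..n} \<rightarrow>\<^sub>E {0..<K} \<and>
      (\<forall>x\<in>{1..n}. \<rho> (\<rho> x) = \<rho> x) \<and> inj_on (\<lambda>x. (\<rho> x, \<tau> x)) {1..n}}"
  define R where "R = {\<rho> \<in> {1..n} \<rightarrow>\<^sub>E {1..n}. (\<forall>x\<in>{1..n}. \<rho> (\<rho> x) = \<rho> x) \<and>
      n \<le> K * card (\<rho> ` {1..n})}"
  define SS where "SS = {S \<in> Pow {1..n}. n \<le> K * card S}"
  define N where "N = real n"
  have N1: "N \<ge> 1" using n unfolding N_def by simp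
  have QR: "Q \<subseteq> R \<times> ({1..n} \<rightarrow>\<^sub>E {0..<K})"
  proof
    fix z assume "z \<in> Q"
    then obtain \<rho> \<tau> where z: "z = (\<rho>, \<tau>)" "\<rho> \<in> {1..n} \<rightarrow>\<^sub>E {1..n}" "\<tau> \<in> {1..n} \<rightarrow>\<^sub>E {0..<K}"
      "\<forall>x\<in>{1..n}. \<rho> (\<rho> x) = \<rho> x" "inj_on (\<lambda>x. (\<rho> x, \<tau> x)) {1..n}"
      unfolding Q_def by blast
    have "(\<lambda>x. (\<rho> x, \<tau> x)) ` {1..n} \<subseteq> \<rho> ` {1..n} \<times> {0..<K}" using z(3) by auto
    then have "card ((\<lambda>x. (\<rho> x, \<tau> x)) ` {1..n}) \<le> card (\<rho> ` {1..n} \<times> {0..<K})"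
      by (intro card_mono) auto
    then have "n \<le> card (\<rho> ` {1..n}) * K" using z(5) by (simp add: card_image card_cartesian_product)
    then show "z \<in> R \<times> ({1..n} \<rightarrow>\<^sub>E {0..<K})" using z unfolding R_def by (auto simp: mult.commute)
  qed
  have fR: "finite R" unfolding R_def by (rule finite_subset[of _ "{1..n} \<rightarrow>\<^sub>E {1..n}"]) (auto intro: finite_PiE)
  have cQ: "card Q \<le> card R * K ^ n"
  proof -
    have "card Q \<le> card (R \<times> ({1..n} \<rightarrow>\<^sub>E {0..<K}))"
      by (rule card_mono[OF _ QR]) (use fR in \<open>simp add: finite_PiE\<close>)
    also have "\<dots> = card R * K ^ n" by (simp add: card_cartesian_product card_PiE)
    finally show ?thesis .
  qed
  define \<Psi> where "\<Psi> = (\<lambda>\<rho>::nat\<Rightarrow>nat. (\<rho> ` {1..n}, restrict \<rho> ({1..n} - \<rho> ` {1..n})))"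
  have injP: "inj_on \<Psi> R"
  proof
    fix \<rho>1 \<rho>2 assume r1: "\<rho>1 \<in> R" and r2: "\<rho>2 \<in> R" and eq: "\<Psi> \<rho>1 = \<Psi> \<rho>2"
    then have im: "\<rho>1 ` {1..n} = \<rho>2 ` {1..n}"
      and re: "restrict \<rho>1 ({1..n} - \<rho>1 ` {1..n}) = restrict \<rho>2 ({1..n} - \<rho>2 ` {1..n})"
      unfolding \<Psi>_def by auto
    have fix1: "\<rho> x = x" if "\<rho> \<in> R" "x \<in> \<rho> ` {1..n}" for \<rho> x
      using that unfolding R_def by auto
    show "\<rho>1 = \<rho>2"
    proof
      fix x show "\<rho>1 x = \<rho>2 x"
      proof (cases "x \<in> {1..n}")
        case False
        have "\<rho>1 \<in> {1..n} \<rightarrow>\<^sub>E {1..n}" "\<rho>2 \<in> {1..n} \<rightarrow>\<^sub>E {1..n}"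
          using r1 r2 unfolding R_def by auto
        then show ?thesis using PiE_arb False by metis
      next
        case True
        show ?thesis
        proof (cases "x \<in> \<rho>1 ` {1..n}")
          case True
          then show ?thesis using fix1[OF r1] fix1[OF r2] im by metis
        next
          case False
          then show ?thesis using re \<open>x \<in> {1..n}\<close> im unfolding restrict_def
            by (metis DiffI)
        qed
      qed
    qed
  qed
  have PR: "\<Psi> ` R \<subseteq> Sigma SS (\<lambda>S. ({1..n} - S) \<rightarrow>\<^sub>E {1..n})"
  proof
    fix z assume "z \<in> \<Psi> ` R"
    then obtain \<rho> where "\<rho> \<in> R" "z = \<Psi> \<rho>" by auto
    then have r: "\<rho> \<in> {1..n} \<rightarrow>\<^sub>E {1..n}" "n \<le> K * card (\<rho> ` {1..n})" "z = \<Psi> \<rho>"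
      unfolding R_def by auto
    have "\<rho> ` {1..n} \<subseteq> {1..n}" using r(1) by (auto simp: PiE_mem)
    then have "\<rho> ` {1..n} \<in> SS" unfolding SS_def using r(2) by simp
    moreover have "restrict \<rho> ({1..n} - \<rho> ` {1..n}) \<in> ({1..n} - \<rho> ` {1..n}) \<rightarrow>\<^sub>E {1..n}"
      using r(1) PiE_mem[OF r(1)] by (simp add: restrict_PiE_iff)
    ultimately show "z \<in> Sigma SS (\<lambda>S. ({1..n} - S) \<rightarrow>\<^sub>E {1..n})"
      unfolding r(3) \<Psi>_def by simp
  qed
  have fSS: "finite SS" unfolding SS_def by simp
  have cR: "card R \<le> (\<Sum>S\<in>SS. n ^ (n - card S))"
  proof -
    have "card R = card (\<Psi> ` R)" using injP by (simp add: card_image)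
    also have "\<dots> \<le> card (Sigma SS (\<lambda>S. ({1..n} - S) \<rightarrow>\<^sub>E {1..n}))"
      by (rule card_mono[OF _ PR]) (use fSS in \<open>auto intro: finite_PiE\<close>)
    also have "\<dots> = (\<Sum>S\<in>SS. card (({1..n} - S) \<rightarrow>\<^sub>E {1..n}))"
      using fSS by (subst card_SigmaI) (auto intro: finite_PiE)
    also have "\<dots> = (\<Sum>S\<in>SS. n ^ (n - card S))"
    proof (rule sum.cong[OF refl])
      fix S assume "S \<in> SS"
      then have "S \<subseteq> {1..n}" unfolding SS_def by auto
      then have "card ({1..n} - S) = n - card S" by (simp add: card_Diff_subset finite_subset)
      then show "card (({1..n} - S) \<rightarrow>\<^sub>E {1..n}) = n ^ (n - card S)" by (simp add: card_PiE)
    qed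
    finally show ?thesis .
  qed
  have hterm: "real (n ^ (n - card S)) \<le> N powr (N - N / real K)" if "S \<in> SS" for S
  proof -
    have S: "S \<subseteq> {1..n}" "n \<le> K * card S" using that unfolding SS_def by auto
    then have cS: "card S \<le> n" by (metis card_atLeastAtMost card_mono diff_Suc_1 finite_atLeastAtMost)
    have "N / real K \<le> real (card S)" using S(2) K unfolding N_def
      by (simp add: divide_le_eq mult.commute) (metis of_nat_le_iff of_nat_mult)
    then have ex: "real (n - card S) \<le> N - N / real K" using cS unfolding N_def by simp
    have "real (n ^ (n - card S)) = N powr real (n - card S)"
      using N1 unfolding N_def by (simp add: powr_realpow)
    also have "\<dots> \<le> N powr (N - N / real K)" using ex N1 by (intro powr_mono) auto
    finally show ?thesis .
  qed
  have "real (card R) \<le> (\<Sum>S\<in>SS. N powr (N - N / real K))"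
  proof -
    have "real (card R) \<le> real (\<Sum>S\<in>SS. n ^ (n - card S))" using cR by linarith
    also have "\<dots> = (\<Sum>S\<in>SS. real (n ^ (n - card S)))" by simp
    also have "\<dots> \<le> (\<Sum>S\<in>SS. N powr (N - N / real K))" by (rule sum_mono) (use hterm in auto)
    finally show ?thesis .
  qed
  also have "\<dots> = real (card SS) * N powr (N - N / real K)" by simp
  also have "\<dots> \<le> 2 ^ n * N powr (N - N / real K)"
  proof -
    have "card SS \<le> card (Pow {1..n})" unfolding SS_def by (rule card_mono) auto
    then have "real (card SS) \<le> 2 ^ n" by (simp add: card_Pow)
    then show ?thesis by (intro mult_right_mono) auto
  qed
  finally have cRr: "real (card R) \<le> 2 ^ n * N powr (N - N / real K)" .
  then have "real (card Q) \<le> real K ^ n * (2 ^ n * N powr (N - N / real K))"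
  proof -
    have "real (card Q) \<le> real (card R) * real K ^ n" using cQ
      by (metis of_nat_le_iff of_nat_mult of_nat_power)
    also have "\<dots> \<le> (2 ^ n * N powr (N - N / real K)) * real K ^ n"
      by (rule mult_right_mono) (use cRr in auto)
    finally show ?thesis by (simp add: ac_simps)
  qed
  then show ?thesis unfolding Q_def N_def by (simp add: ac_simps)
qed

definition rs :: "nat set \<Rightarrow> nat \<Rightarrow> nat" where
  "rs U u = (LEAST q. {q..u} \<subseteq> U)"

lemma rs_props: assumes "u \<in> U" shows "rs U u \<le> u" "{rs U u..u} \<subseteq> U"
proof -
  have "{u..u} \<subseteq> U" using assms by simp
  then show "rs U u \<le> u" unfolding rs_def by (rule Least_le)
  show "{rs U u..u} \<subseteq> U" unfolding rs_def by (rule LeastI[of _ u]) (use assms in simp)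
qed

lemma rs_min: "{q..u} \<subseteq> U \<Longrightarrow> rs U u \<le> q"
  unfolding rs_def by (rule Least_le)

lemma rs_eq:
  assumes u: "u \<in> U" and v: "rs U u \<le> v" "v \<le> u"
  shows "rs U v = rs U u"
proof -
  have vU: "v \<in> U" using rs_props[OF u] v by auto
  have "{rs U u..v} \<subseteq> U" using rs_props[OF u] v by auto
  then have a: "rs U v \<le> rs U u" by (rule rs_min)
  have "{rs U v..u} \<subseteq> {rs U v..v} \<union> {v..u}" by auto
  also have "\<dots> \<subseteq> U" using rs_props[OF vU] rs_props[OF u] v by auto
  finally have "rs U u \<le> rs U v" by (rule rs_min)
  then show ?thesis using a by simp
qed

lemma rs_succ:
  assumes "u \<in> U" "u + 1 \<in> U"
  shows "rs U (u + 1) = rs U u"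
proof -
  have "{u..u+1} = {u, u+1}" by auto
  then have "{u..u+1} \<subseteq> U" using assms by simp
  then have "rs U (u+1) \<le> u" by (rule rs_min)
  then show ?thesis using rs_eq[OF assms(2), of u] by simp
qed

lemma pairs_cong:
  assumes "\<And>x y. x \<in> V \<Longrightarrow> y \<in> V \<Longrightarrow> x \<noteq> y \<Longrightarrow> P x y \<longleftrightarrow> Q x y"
  shows "{{x, y} | x y. x \<in> V \<and> y \<in> V \<and> x \<noteq> y \<and> P x y} =
         {{x, y} | x y. x \<in> V \<and> y \<in> V \<and> x \<noteq> y \<and> Q x y}"
  using assms by blast

definition Dc :: "(nat \<Rightarrow> nat) \<Rightarrow> (nat \<Rightarrow> nat) \<Rightarrow> nat \<Rightarrow> nat \<Rightarrow> bool" where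
  "Dc \<rho> \<tau> x y \<longleftrightarrow> \<rho> x = \<rho> y \<and> (\<tau> x = \<tau> y + 1 \<or> \<tau> y = \<tau> x + 1)"

definition Dg :: "('a \<Rightarrow> 'a \<Rightarrow> bool) \<Rightarrow> nat \<Rightarrow> (nat \<Rightarrow> 'a) \<Rightarrow> (nat \<Rightarrow> nat) \<Rightarrow> (nat \<Rightarrow> nat) \<Rightarrow> graph" where
  "Dg h n lt \<rho> \<tau> = ({1..n}, {{x, y} | x y. x \<in> {1..n} \<and> y \<in> {1..n} \<and> x \<noteq> y \<and>
      ((Dc \<rho> \<tau> x y \<and> \<not> h (lt x) (lt y)) \<or> (\<not> Dc \<rho> \<tau> x y \<and> h (lt x) (lt y)))})"

lemma represent:
  assumes sym: "\<forall>a b. h a b \<longrightarrow> h b a"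
    and ig: "is_graph G" and fG: "fst G = {1..n}"
    and f: "bij_betw f {1..n} U"
    "\<forall>x\<in>{1..n}. \<forall>y\<in>{1..n}. {x, y} \<in> snd G \<longleftrightarrow> {f x, f y} \<in> snd (G_wH w h U)"
    and U0: "0 \<notin> U"
    and norun: "\<forall>t. \<not> {t+1..t+K} \<subseteq> U"
  defines "\<rho> \<equiv> restrict (\<lambda>x. inv_into {1..n} f (rs U (f x))) {1..n}"
    and "\<tau> \<equiv> restrict (\<lambda>x. f x - rs U (f x)) {1..n}"
    and "lt \<equiv> restrict (w \<circ> f) {1..n}"
  shows "G = Dg h n lt \<rho> \<tau>"
    and "\<rho> \<in> {1..n} \<rightarrow>\<^sub>E {1..n}" "\<tau> \<in> {1..n} \<rightarrow>\<^sub>E {0..<K}"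
    "\<forall>x\<in>{1..n}. \<rho> (\<rho> x) = \<rho> x" "inj_on (\<lambda>x. (\<rho> x, \<tau> x)) {1..n}"
proof -
  have fU: "\<And>x. x \<in> {1..n} \<Longrightarrow> f x \<in> U" using f(1) by (auto simp: bij_betw_def)
  have injf: "inj_on f {1..n}" using f(1) by (simp add: bij_betw_def)
  have imf: "f ` {1..n} = U" using f(1) by (simp add: bij_betw_def)
  have rsU: "\<And>x. x \<in> {1..n} \<Longrightarrow> rs U (f x) \<in> U" using rs_props fU by fastforce
  have finv: "\<And>a. a \<in> U \<Longrightarrow> f (inv_into {1..n} f a) = a \<and> inv_into {1..n} f a \<in> {1..n}"
    using imf by (metis f_inv_into_f inv_into_into)
  have \<rho>x: "\<And>x. x \<in> {1..n} \<Longrightarrow> \<rho> x = inv_into {1..n} f (rs U (f x))" unfolding \<rho>_def by simp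
  have \<tau>x: "\<And>x. x \<in> {1..n} \<Longrightarrow> \<tau> x = f x - rs U (f x)" unfolding \<tau>_def by simp
  have f\<rho>: "\<And>x. x \<in> {1..n} \<Longrightarrow> f (\<rho> x) = rs U (f x) \<and> \<rho> x \<in> {1..n}"
    using \<rho>x finv rsU by metis
  have decomp: "\<And>x. x \<in> {1..n} \<Longrightarrow> f x = rs U (f x) + \<tau> x"
    using \<tau>x rs_props fU by fastforce
  have rho_eq: "\<rho> x = \<rho> y \<longleftrightarrow> rs U (f x) = rs U (f y)" if "x \<in> {1..n}" "y \<in> {1..n}" for x y
    using f\<rho>[OF that(1)] f\<rho>[OF that(2)] \<rho>x that by metis
  have con1: "Dc \<rho> \<tau> x y" if xy: "x \<in> {1..n}" "y \<in> {1..n}" and s: "f y = f x + 1" for x y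
  proof -
    have "rs U (f y) = rs U (f x)" using rs_succ[of "f x" U] fU[OF xy(1)] fU[OF xy(2)] s by simp
    then show ?thesis unfolding Dc_def using rho_eq[OF xy] decomp[OF xy(1)] decomp[OF xy(2)] s
      by auto
  qed
  have con: "(f x = f y + 1 \<or> f y = f x + 1) \<longleftrightarrow> Dc \<rho> \<tau> x y"
    if xy: "x \<in> {1..n}" "y \<in> {1..n}" for x y
  proof
    assume "f x = f y + 1 \<or> f y = f x + 1"
    then show "Dc \<rho> \<tau> x y"
      using con1[OF xy] con1[OF xy(2,1)] unfolding Dc_def by auto
  next
    assume "Dc \<rho> \<tau> x y"
    then have "rs U (f x) = rs U (f y)" "\<tau> x = \<tau> y + 1 \<or> \<tau> y = \<tau> x + 1"
      using rho_eq[OF xy] unfolding Dc_def by auto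
    then show "f x = f y + 1 \<or> f y = f x + 1" using decomp[OF xy(1)] decomp[OF xy(2)] by auto
  qed
  have "snd G = {{x, y} | x y. x \<in> {1..n} \<and> y \<in> {1..n} \<and> x \<noteq> y \<and> {f x, f y} \<in> snd (G_wH w h U)}"
    using iso_edges[OF ig, of f "G_wH w h U"] f(2) unfolding fG by blast
  also have "\<dots> = {{x, y} | x y. x \<in> {1..n} \<and> y \<in> {1..n} \<and> x \<noteq> y \<and>
      ((Dc \<rho> \<tau> x y \<and> \<not> h (lt x) (lt y)) \<or> (\<not> Dc \<rho> \<tau> x y \<and> h (lt x) (lt y)))}"
  proof (rule pairs_cong)
    fix x y assume xy: "x \<in> {1..n}" "y \<in> {1..n}" "x \<noteq> y"
    then have "f x \<noteq> f y" using injf by (meson inj_on_eq_iff)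
    then show "{f x, f y} \<in> snd (G_wH w h U) \<longleftrightarrow>
      ((Dc \<rho> \<tau> x y \<and> \<not> h (lt x) (lt y)) \<or> (\<not> Dc \<rho> \<tau> x y \<and> h (lt x) (lt y)))"
      unfolding GwH_edge[OF sym] Redge_def using fU xy con[OF xy(1,2)] unfolding lt_def by auto
  qed
  finally show "G = Dg h n lt \<rho> \<tau>" unfolding Dg_def using fG by (metis prod.collapse)
  show "\<rho> \<in> {1..n} \<rightarrow>\<^sub>E {1..n}" unfolding \<rho>_def using f\<rho> \<rho>x by (auto simp: restrict_PiE_iff)
  show "\<tau> \<in> {1..n} \<rightarrow>\<^sub>E {0..<K}"
    unfolding \<tau>_def restrict_PiE_iff
  proof
    fix x assume x: "x \<in> {1..n}"
    show "f x - rs U (f x) \<in> {0..<K}"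
    proof (rule ccontr)
      assume "f x - rs U (f x) \<notin> {0..<K}"
      then have K: "K \<le> f x - rs U (f x)" by simp
      have r1: "rs U (f x) \<ge> 1" using rsU[OF x] U0 by (metis less_one not_le)
      have "{(rs U (f x) - 1) + 1..(rs U (f x) - 1) + K} \<subseteq> {rs U (f x)..f x}"
        using K r1 by auto
      also have "\<dots> \<subseteq> U" using rs_props(2) fU[OF x] by blast
      finally show False using norun by blast
    qed
  qed
  show "\<forall>x\<in>{1..n}. \<rho> (\<rho> x) = \<rho> x"
  proof
    fix x assume x: "x \<in> {1..n}"
    have "rs U (rs U (f x)) = rs U (f x)" using rs_eq[of "f x" U "rs U (f x)"] rs_props fU[OF x] by simp
    then show "\<rho> (\<rho> x) = \<rho> x" using f\<rho>[OF x] \<rho>x[of "\<rho> x"] \<rho>x[OF x] by metis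
  qed
  show "inj_on (\<lambda>x. (\<rho> x, \<tau> x)) {1..n}"
  proof
    fix x y assume xy: "x \<in> {1..n}" "y \<in> {1..n}" "(\<rho> x, \<tau> x) = (\<rho> y, \<tau> y)"
    then have "f x = f y" using rho_eq[OF xy(1,2)] decomp[OF xy(1)] decomp[OF xy(2)] by auto
    then show "x = y" using injf xy(1,2) by (meson inj_on_eq_iff)
  qed
qed

lemma speed_upper:
  assumes sym: "\<forall>a b. h a b \<longrightarrow> h b a" and A: "finite A" and wA: "\<forall>i\<ge>1. w i \<in> A"
    and YX: "Y \<subseteq> P_wH w h" and K: "K \<ge> 1" and n: "n \<ge> 1"
    and norun: "\<forall>G U f t. G \<in> Y \<longrightarrow> bij_betw f (fst G) U \<longrightarrow>
     (\<forall>x\<in>fst G. \<forall>y\<in>fst G. {x, y} \<in> snd G \<longleftrightarrow> {f x, f y} \<in> snd (G_wH w h U)) \<longrightarrow>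
     \<not> {t+1..t+K} \<subseteq> U"
  shows "real (speed Y n) \<le> real (card A) ^ n * (real K ^ n * 2 ^ n * real n powr (real n - real n / real K))"
proof -
  define Q where "Q = {(\<rho>, \<tau>). \<rho> \<in> {1..n} \<rightarrow>\<^sub>E {1..n} \<and> \<tau> \<in> {1..n} \<rightarrow>\<^sub>E {0..<K} \<and>
      (\<forall>x\<in>{1..n}. \<rho> (\<rho> x) = \<rho> x) \<and> inj_on (\<lambda>x. (\<rho> x, \<tau> x)) {1..n}}"
  define L where "L = PiE {1..n} (\<lambda>_. A)"
  define SY where "SY = {G \<in> Y. fst G = {1..n}}"
  define \<Psi> where "\<Psi> = (\<lambda>(lt, (\<rho>, \<tau>)). Dg h n lt \<rho> \<tau>)"
  have sub: "SY \<subseteq> \<Psi> ` (L \<times> Q)"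
  proof
    fix G assume "G \<in> SY"
    then have GY: "G \<in> Y" and fG: "fst G = {1..n}" unfolding SY_def by auto
    then obtain U where U: "finite U" "0 \<notin> U" "graph_iso G (G_wH w h U)" and ig: "is_graph G"
      using YX unfolding P_wH_def by blast
    obtain f where f: "bij_betw f (fst G) U"
      "\<forall>x\<in>fst G. \<forall>y\<in>fst G. {x, y} \<in> snd G \<longleftrightarrow> {f x, f y} \<in> snd (G_wH w h U)"
      using U(3) unfolding graph_iso_def by auto
    have nr: "\<forall>t. \<not> {t+1..t+K} \<subseteq> U" using spec[OF spec[OF spec[OF norun, of G], of U], of f] GY f by blast
    note r = represent[OF sym ig fG f[unfolded fG] U(2) nr]
    define lt where "lt = restrict (w \<circ> f) {1..n}"
    have "lt \<in> L" unfolding L_def lt_def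
    proof (rule restrict_PiE_iff[THEN iffD2], intro ballI)
      fix x assume x: "x \<in> {1..n}"
      then have "f x \<in> U" using f(1) fG by (auto simp: bij_betw_def)
      then have "f x \<ge> 1" using U(2) by (metis less_one not_le)
      then show "(w \<circ> f) x \<in> A" using wA by simp
    qed
    moreover have "(restrict (\<lambda>x. inv_into {1..n} f (rs U (f x))) {1..n},
        restrict (\<lambda>x. f x - rs U (f x)) {1..n}) \<in> Q"
      unfolding Q_def using r(2-5) by simp
    ultimately show "G \<in> \<Psi> ` (L \<times> Q)" unfolding \<Psi>_def lt_def using r(1)
      by (intro image_eqI[of _ _ "(restrict (w \<circ> f) {1..n}, restrict (\<lambda>x. inv_into {1..n} f (rs U (f x))) {1..n},
        restrict (\<lambda>x. f x - rs U (f x)) {1..n})"]) auto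
  qed
  have fQ: "finite Q"
    by (rule finite_subset[of _ "({1..n} \<rightarrow>\<^sub>E {1..n}) \<times> ({1..n} \<rightarrow>\<^sub>E {0..<K})"])
       (unfold Q_def, force, intro finite_cartesian_product finite_PiE, simp_all)
  have fL: "finite L" unfolding L_def using A by (simp add: finite_PiE)
  have "card SY \<le> card (\<Psi> ` (L \<times> Q))" by (rule card_mono[OF _ sub]) (use fQ fL in simp)
  also have "\<dots> \<le> card (L \<times> Q)" by (rule card_image_le) (use fQ fL in simp)
  also have "\<dots> = card A ^ n * card Q" unfolding L_def by (simp add: card_cartesian_product card_PiE)
  finally have "card SY \<le> card A ^ n * card Q" .
  then have "real (card SY) \<le> real (card A ^ n * card Q)" by (simp only: of_nat_le_iff)
  then have "real (speed Y n) \<le> real (card A) ^ n * real (card Q)"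
    unfolding speed_def SY_def by simp
  also have "\<dots> \<le> real (card A) ^ n * (real K ^ n * 2 ^ n * real n powr (real n - real n / real K))"
    by (rule mult_left_mono) (use count_Q[OF K n] in \<open>auto simp: Q_def\<close>)
  finally show ?thesis .
qed

lemma final_contra:
  fixes \<epsilon> :: "nat \<Rightarrow> real" and s :: "nat \<Rightarrow> nat" and C :: real and K :: nat
  assumes lim: "\<epsilon> \<longlonglongrightarrow> 0"
    and ev: "\<forall>\<^sub>F n in sequentially. real (s n) \<ge> real n powr ((1 - \<epsilon> n) * real n)"
    and C: "C > 0" and K: "K \<ge> 1"
    and bound: "\<forall>n\<ge>1. real (s n) \<le> C ^ n * real n powr (real n - real n / real K)"
  shows False
proof -
  define M where "M = 2 * real K * \<bar>ln C\<bar> + 1"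
  have Kp: "real K \<ge> 1" using K by simp
  have e1: "\<forall>\<^sub>F n in sequentially. dist (\<epsilon> n) 0 < 1 / (2 * real K)"
    using tendstoD[OF lim, of "1 / (2 * real K)"] Kp by simp
  have l: "filterlim (\<lambda>n::nat. ln (real n)) at_top sequentially"
    using filterlim_compose[OF ln_at_top filterlim_real_sequentially] by (simp add: o_def)
  have e2: "\<forall>\<^sub>F n in sequentially. M \<le> ln (real n)"
    using l unfolding filterlim_at_top by blast
  have e3: "\<forall>\<^sub>F n in sequentially. (2::nat) \<le> n" by (rule eventually_ge_at_top)
  obtain n where n: "dist (\<epsilon> n) 0 < 1 / (2 * real K)" "M \<le> ln (real n)" "2 \<le> n"
    "real (s n) \<ge> real n powr ((1 - \<epsilon> n) * real n)"
    using eventually_happens'[OF sequentially_bot eventually_conj[OF e1 eventually_conj[OF e2 eventually_conj[OF e3 ev]]]]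
    by blast
  define N where "N = real n"
  define l where "l = ln N"
  define e where "e = \<epsilon> n"
  have N: "N \<ge> 2" using n(3) unfolding N_def by simp
  have lM: "M \<le> l" using n(2) unfolding l_def N_def .
  have eK: "\<bar>e\<bar> < 1 / (2 * real K)" using n(1) unfolding e_def by (simp add: dist_real_def)
  have "N powr ((1 - e) * N) \<le> C ^ n * N powr (N - N / real K)"
    using n(4) bound n(3) unfolding N_def e_def by (meson order_trans one_le_numeral order.trans[OF _ n(3)])
  then have "ln (N powr ((1 - e) * N)) \<le> ln (C ^ n * N powr (N - N / real K))"
    using N C by (subst ln_le_cancel_iff) auto
  also have "ln (C ^ n * N powr (N - N / real K)) = N * ln C + (N - N / real K) * l"
    using N C unfolding l_def N_def by (simp add: ln_mult ln_realpow ln_powr)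
  finally have ineq: "(1 - e) * N * l \<le> N * ln C + (N - N / real K) * l"
    using N unfolding l_def by (simp add: ln_powr)
  have "N * ((1 / real K - e) * l) \<le> N * ln C"
    using ineq by (simp add: algebra_simps)
  then have ineq2: "(1 / real K - e) * l \<le> ln C" using N by simp
  have lpos: "l > 0" using lM unfolding M_def by (smt (verit) Kp abs_ge_zero mult_nonneg_nonneg)
  have "e < 1 / (2 * real K)" using eK by linarith
  moreover have "1 / real K = 2 * (1 / (2 * real K))" by simp
  ultimately have "1 / (2 * real K) < 1 / real K - e" by linarith
  then have "1 / (2 * real K) * l < (1 / real K - e) * l" using lpos by (rule mult_strict_right_mono)
  then have "1 / (2 * real K) * l < \<bar>ln C\<bar>" using ineq2 by linarith
  then have "l / (2 * real K) < \<bar>ln C\<bar>" by simp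
  then have "l < 2 * real K * \<bar>ln C\<bar>" using Kp by (simp add: divide_less_eq mult.commute)
  then show False using lM unfolding M_def by simp
qed

theorem theorem3p10:
  fixes w :: "nat \<Rightarrow> 'a" and A :: "'a set" and h :: "'a \<Rightarrow> 'a \<Rightarrow> bool"
  assumes "finite A"
    and "\<forall>i\<ge>1. w i \<in> A"
    and "almost_periodic w"
    and "\<forall>a b. h a b \<longrightarrow> a \<in> A \<and> b \<in> A"
    and "\<forall>a b. h a b \<longrightarrow> h b a"
  shows "minimal_above_Bell (P_wH w h)"
proof -
  note sym = assms(5) and A = assms(1) and wA = assms(2)
  have cA: "card A \<ge> 1" using wA A by (metis card_0_eq empty_iff le_refl less_one not_le)
  have "\<not> above_Bell Y" if hY: "hereditary Y" and YX: "Y \<subset> P_wH w h" for Y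
  proof
    assume ab: "above_Bell Y"
    obtain G0 where G0: "G0 \<in> P_wH w h" "G0 \<notin> Y" using YX by blast
    obtain K where K: "\<forall>G U f t. G \<in> Y \<longrightarrow> bij_betw f (fst G) U \<longrightarrow>
     (\<forall>x\<in>fst G. \<forall>y\<in>fst G. {x, y} \<in> snd G \<longleftrightarrow> {f x, f y} \<in> snd (G_wH w h U)) \<longrightarrow>
     \<not> {t+1..t+K} \<subseteq> U"
      using no_long_run[OF sym assms(3) hY G0] by blast
    have K': "\<forall>G U f t. G \<in> Y \<longrightarrow> bij_betw f (fst G) U \<longrightarrow>
     (\<forall>x\<in>fst G. \<forall>y\<in>fst G. {x, y} \<in> snd G \<longleftrightarrow> {f x, f y} \<in> snd (G_wH w h U)) \<longrightarrow>
     \<not> {t+1..t+(K+1)} \<subseteq> U"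
    proof (intro allI impI notI)
      fix G U f t
      assume a: "G \<in> Y" "bij_betw f (fst G) U"
        "\<forall>x\<in>fst G. \<forall>y\<in>fst G. {x, y} \<in> snd G \<longleftrightarrow> {f x, f y} \<in> snd (G_wH w h U)"
        "{t+1..t+(K+1)} \<subseteq> U"
      have "{t+1..t+K} \<subseteq> U" using a(4) by auto
      then show False using spec[OF spec[OF spec[OF spec[OF K, of G], of U], of f], of t] a(1-3) by blast
    qed
    obtain \<epsilon> where e: "\<epsilon> \<longlonglongrightarrow> 0"
      "\<forall>\<^sub>F n in sequentially. real (speed Y n) \<ge> real n powr ((1 - \<epsilon> n) * real n)"
      using ab unfolding above_Bell_def by blast
    define C where "C = real (card A) * real (K + 1) * 2"
    have Cpos: "C > 0" using cA unfolding C_def by simp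
    have bound: "\<forall>n\<ge>1. real (speed Y n) \<le> C ^ n * real n powr (real n - real n / real (K + 1))"
    proof (intro allI impI)
      fix n :: nat assume n: "n \<ge> 1"
      have "real (speed Y n) \<le> real (card A) ^ n * (real (K + 1) ^ n * 2 ^ n *
          real n powr (real n - real n / real (K + 1)))"
        by (rule speed_upper[OF sym A wA _ _ n K']) (use YX in auto)
      also have "\<dots> = C ^ n * real n powr (real n - real n / real (K + 1))"
        unfolding C_def by (simp add: power_mult_distrib)
      finally show "real (speed Y n) \<le> C ^ n * real n powr (real n - real n / real (K + 1))" .
    qed
    show False by (rule final_contra[OF e(1) e(2) Cpos _ bound]) simp
  qed
  then show ?thesis unfolding minimal_above_Bell_def
    using hereditary_P[OF sym] above_Bell_P[OF sym A wA] by blast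
qed

end
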